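(* For $\alpha,\varepsilon>0$ let $I=(0,\varepsilon)$, $\mathscr{V}=\{\rho\in H^1(I):\rho(0)=0,\ \rho(\varepsilon)=1\}$ and $F_{\alpha,\varepsilon}(\rho)=\int_0^\varepsilon e^{\alpha\ell}|\rho'(\ell)|^2\,\mathrm{d}\ell$ for $\rho\in\mathscr{V}$. Then: (a) the problem $\inf\{F_{\alpha,\varepsilon}(\rho):\rho\in\mathscr{V}\}$ has a unique minimizer, namely $\rho_{\alpha,\varepsilon}(\ell)=\dfrac{1-e^{-\alpha\ell}}{1-e^{-\alpha\varepsilon}}$; (b) $\inf\{F_{\alpha,\varepsilon}(\rho):\rho\in\mathscr{V}\}=\dfrac{\alpha}{1-e^{-\varepsilon\alpha}}$; (c) for every $c_0>0$ there exists $C>0$ such that, whenever $1-e^{-\alpha\varepsilon}\ge c_0$, $$\int_0^\varepsilon e^{\alpha\ell}|\partial_\alpha\rho_{\alpha,\varepsilon}(\ell)|^2\,\mathrm{d}\ell\le C\big(\alpha^{-3}+e^{-\alpha\varepsilon}\varepsilon^2\alpha^{-1}\big).$$ *)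

theory Defs
  imports "HOL-Analysis.Analysis"
begin

text \<open>H^1 on the interval I = (0,eps) in one dimension: a function rho (considered on the
closed interval [0,eps], i.e. its continuous representative) is in H^1(I) with weak
derivative g iff g is in L^2(I) and rho is the integral of g (absolute continuity).\<close>

definition weak_deriv_H1 :: "real \<Rightarrow> (real \<Rightarrow> real) \<Rightarrow> (real \<Rightarrow> real) \<Rightarrow> bool" where
  "weak_deriv_H1 eps rho g \<longleftrightarrow>
     g \<in> borel_measurable lborel \<and>
     set_integrable lborel {0..eps} g \<and>
     set_integrable lborel {0..eps} (\<lambda>t. (g t)\<^sup>2) \<and>
     (\<forall>x\<in>{0..eps}. rho x = rho 0 + (LINT t:{0..x}|lborel. g t))"

definition H1 :: "real \<Rightarrow> (real \<Rightarrow> real) set" where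
  "H1 eps = {rho. \<exists>g. weak_deriv_H1 eps rho g}"

definition admissible :: "real \<Rightarrow> (real \<Rightarrow> real) set" where
  "admissible eps = {rho \<in> H1 eps. rho 0 = 0 \<and> rho eps = 1}"

text \<open>The weak derivative (unique a.e.; any choice gives the same value of F).\<close>
definition wderiv :: "real \<Rightarrow> (real \<Rightarrow> real) \<Rightarrow> (real \<Rightarrow> real)" where
  "wderiv eps rho = (SOME g. weak_deriv_H1 eps rho g)"

definition F :: "real \<Rightarrow> real \<Rightarrow> (real \<Rightarrow> real) \<Rightarrow> real" where
  "F \<alpha> eps rho = (LINT l:{0..eps}|lborel. exp (\<alpha> * l) * (wderiv eps rho l)\<^sup>2)"

definition rho_opt :: "real \<Rightarrow> real \<Rightarrow> real \<Rightarrow> real" where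
  "rho_opt \<alpha> eps l = (1 - exp (- \<alpha> * l)) / (1 - exp (- \<alpha> * eps))"

end

theory Submission
  imports Defs
begin

lemma ae_zero_from_tails:
  fixes u :: "real \<Rightarrow> real"
  assumes int: "integrable lborel u" and tail: "\<And>x. (LINT t:{x<..}|lborel. u t) = 0"
  shows "AE x in lborel. u x = 0"
proof -
  define up where "up x = max 0 (u x)" for x
  define um where "um x = max 0 (- u x)" for x
  have [measurable]: "u \<in> borel_measurable borel" using int by simp
  have ip: "integrable lborel up" and im: "integrable lborel um"
    using int unfolding up_def um_def by auto
  have u_eq: "u x = up x - um x" for x by (auto simp: up_def um_def)
  have upn: "0 \<le> up x" "0 \<le> um x" for x by (auto simp: up_def um_def)
  have key: "emeasure (density lborel (\<lambda>x. ennreal (f x))) A = ennreal (LINT t:A|lborel. f t)"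
    if "A \<in> sets borel" "integrable lborel f" "\<And>x. 0 \<le> f x" for A f
  proof -
    have [measurable]: "f \<in> borel_measurable borel" using that by simp
    have "emeasure (density lborel (\<lambda>x. ennreal (f x))) A = (\<integral>\<^sup>+ x. ennreal (f x) * indicator A x \<partial>lborel)"
      using that by (intro emeasure_density) auto
    also have "\<dots> = (\<integral>\<^sup>+ x. ennreal (indicator A x *\<^sub>R f x) \<partial>lborel)"
      by (intro nn_integral_cong) (auto split: split_indicator)
    also have "\<dots> = ennreal (LINT t:A|lborel. f t)"
      unfolding set_lebesgue_integral_def
      using that by (intro nn_integral_eq_integral integrable_mult_indicator) (auto split: split_indicator)
    finally show ?thesis .
  qed
  have MN: "density lborel (\<lambda>x. ennreal (up x)) = density lborel (\<lambda>x. ennreal (um x))"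
  proof (rule measure_eqI_lessThan)
    fix x :: real
    show "emeasure (density lborel (\<lambda>x. ennreal (up x))) {x<..} < \<infinity>"
      using key[OF _ ip upn(1)] by simp
    have si: "set_integrable lborel {x<..} f" if "integrable lborel f" for f :: "real \<Rightarrow> real"
      unfolding set_integrable_def using that by (intro integrable_mult_indicator) auto
    have "(LINT t:{x<..}|lborel. up t) - (LINT t:{x<..}|lborel. um t) = (LINT t:{x<..}|lborel. u t)"
      unfolding u_eq using si[OF ip] si[OF im] by (simp add: set_integral_diff)
    then have "(LINT t:{x<..}|lborel. up t) = (LINT t:{x<..}|lborel. um t)" using tail[of x] by simp
    then show "emeasure (density lborel (\<lambda>x. ennreal (up x))) {x<..} = emeasure (density lborel (\<lambda>x. ennreal (um x))) {x<..}"
      using key[OF _ ip upn(1)] key[OF _ im upn(2)] by simp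
  qed auto
  have "AE x in lborel. up x = um x"
  proof (rule density_unique_real[OF ip im])
    fix A :: "real set" assume A: "A \<in> sets lborel"
    have "ennreal (LINT t:A|lborel. up t) = ennreal (LINT t:A|lborel. um t)"
      using key[OF _ ip upn(1)] key[OF _ im upn(2)] A MN by simp
    moreover have "0 \<le> (LINT t:A|lborel. up t)" "0 \<le> (LINT t:A|lborel. um t)"
      unfolding set_lebesgue_integral_def using upn
      by (auto intro!: integral_nonneg split: split_indicator)
    ultimately show "(LINT t:A|lborel. up t) = (LINT t:A|lborel. um t)" by simp
  qed
  then show ?thesis by eventually_elim (simp add: u_eq)
qed

lemma ae_zero_interval:
  fixes d :: "real \<Rightarrow> real" and eps :: real
  assumes si: "set_integrable lborel {0..eps} d" and z: "\<And>x. x \<in> {0..eps} \<Longrightarrow> (LINT t:{0..x}|lborel. d t) = 0"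
    and "0 \<le> eps"
  shows "AE x in lborel. x \<in> {0..eps} \<longrightarrow> d x = 0"
proof -
  define u where "u t = indicator {0..eps} t * d t" for t
  have iu: "integrable lborel u" using si unfolding set_integrable_def u_def by simp
  have "AE x in lborel. u x = 0"
  proof (rule ae_zero_from_tails[OF iu])
    fix x :: real
    show "(LINT t:{x<..}|lborel. u t) = 0"
    proof (cases "x < 0")
      case True
      have "(LINT t:{x<..}|lborel. u t) = (LINT t:{0..eps}|lborel. d t)"
        unfolding set_lebesgue_integral_def u_def using True
        by (intro Bochner_Integration.integral_cong) (auto split: split_indicator)
      then show ?thesis using z[of eps] \<open>0 \<le> eps\<close> by simp
    next
      case False
      have sub: "set_integrable lborel {0..min x eps} d"
        by (rule set_integrable_subset[OF si]) auto
      have "(LINT t:{x<..}|lborel. u t) = (LINT t:{0..eps}|lborel. d t) - (LINT t:{0..min x eps}|lborel. d t)"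
        unfolding set_lebesgue_integral_def u_def
        apply (subst Bochner_Integration.integral_diff[symmetric])
        using si sub False apply (auto simp: set_integrable_def)[2]
        using False by (intro Bochner_Integration.integral_cong) (auto split: split_indicator)
      then show ?thesis using z[of eps] z[of "min x eps"] \<open>0 \<le> eps\<close> False by simp
    qed
  qed
  then show ?thesis by eventually_elim (auto simp: u_def)
qed

definition hopt :: "real \<Rightarrow> real \<Rightarrow> real \<Rightarrow> real" where
  "hopt \<alpha> eps l = \<alpha> * exp (- \<alpha> * l) / (1 - exp (- \<alpha> * eps))"

lemma D_pos: "(\<alpha>::real) > 0 \<Longrightarrow> eps > 0 \<Longrightarrow> 1 - exp (- \<alpha> * eps) > 0"
  using mult_pos_pos[of \<alpha> eps] by simp

lemma hopt_cont: "continuous_on A (hopt \<alpha> eps)"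
  unfolding hopt_def divide_inverse by (intro continuous_intros)

lemma hopt_meas[measurable]: "hopt \<alpha> eps \<in> borel_measurable borel"
  by (intro borel_measurable_continuous_onI hopt_cont)

lemma rho_opt_deriv: "((rho_opt \<alpha> eps) has_real_derivative hopt \<alpha> eps l) (at l within S)"
proof -
  have "((\<lambda>l. 1 - exp (- \<alpha> * l)) has_real_derivative \<alpha> * exp (- \<alpha> * l)) (at l within S)"
    by (auto intro!: derivative_eq_intros)
  from DERIV_cdivide[OF this, of "1 - exp (- \<alpha> * eps)"] show ?thesis
    unfolding rho_opt_def hopt_def by (simp add: fun_eq_iff)
qed

lemma hopt_int:
  assumes "0 \<le> x"
  shows "(LINT t:{0..x}|lborel. hopt \<alpha> eps t) = rho_opt \<alpha> eps x"
proof -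
  have "(LINT t:{0..x}|lborel. hopt \<alpha> eps t) = (LBINT t=ereal 0..ereal x. hopt \<alpha> eps t)"
    using interval_integral_Icc[of 0 x "hopt \<alpha> eps", symmetric] assms by simp
  also have "\<dots> = rho_opt \<alpha> eps x - rho_opt \<alpha> eps 0"
    by (rule interval_integral_FTC_finite)
       (auto intro: hopt_cont simp: has_real_derivative_iff_has_vector_derivative[symmetric] rho_opt_deriv)
  also have "rho_opt \<alpha> eps 0 = 0" by (simp add: rho_opt_def)
  finally show ?thesis by simp
qed

lemma hopt_exp: "(\<alpha>::real) > 0 \<Longrightarrow> eps > 0 \<Longrightarrow> exp (\<alpha> * l) * hopt \<alpha> eps l = \<alpha> / (1 - exp (- \<alpha> * eps))"
  unfolding hopt_def by (simp add: exp_minus field_simps)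

lemma rho_opt_eps: "(\<alpha>::real) > 0 \<Longrightarrow> eps > 0 \<Longrightarrow> rho_opt \<alpha> eps eps = 1"
  unfolding rho_opt_def using D_pos[of \<alpha> eps] by simp

lemma hopt_si: "set_integrable lborel {a..b} (hopt \<alpha> eps)"
  by (intro borel_integrable_atLeastAtMost' hopt_cont)

lemma F_identity:
  fixes \<alpha> eps :: real
  assumes "\<alpha> > 0" "eps > 0" and wd: "weak_deriv_H1 eps \<sigma> g" and one: "(LINT l:{0..eps}|lborel. g l) = 1"
  shows "set_integrable lborel {0..eps} (\<lambda>l. exp (\<alpha>*l) * (g l - hopt \<alpha> eps l)\<^sup>2)"
    and "(LINT l:{0..eps}|lborel. exp (\<alpha>*l) * (g l)\<^sup>2) = \<alpha> / (1 - exp (- \<alpha> * eps))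
           + (LINT l:{0..eps}|lborel. exp (\<alpha>*l) * (g l - hopt \<alpha> eps l)\<^sup>2)"
proof -
  define m where "m = \<alpha> / (1 - exp (- \<alpha> * eps))"
  from wd have gm[measurable]: "g \<in> borel_measurable borel" and gi: "set_integrable lborel {0..eps} g"
    and g2i: "set_integrable lborel {0..eps} (\<lambda>t. (g t)\<^sup>2)"
    unfolding weak_deriv_H1_def by auto
  have hi: "set_integrable lborel {0..eps} (hopt \<alpha> eps)" by (rule hopt_si)
  have hint: "(LINT l:{0..eps}|lborel. hopt \<alpha> eps l) = 1"
    using hopt_int[of eps \<alpha> eps] rho_opt_eps[OF assms(1,2)] assms by simp
  have eg2: "set_integrable lborel {0..eps} (\<lambda>l. exp (\<alpha>*l) * (g l)\<^sup>2)"
  proof (rule set_integrable_bound[of _ _ "\<lambda>l. exp (\<alpha>*eps) * (g l)\<^sup>2"])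
    show "set_integrable lborel {0..eps} (\<lambda>l. exp (\<alpha> * eps) * (g l)\<^sup>2)"
      using g2i by simp
    show "set_borel_measurable lborel {0..eps} (\<lambda>l. exp (\<alpha> * l) * (g l)\<^sup>2)"
      unfolding set_borel_measurable_def by measurable
    show "AE x in lborel. x \<in> {0..eps} \<longrightarrow> norm (exp (\<alpha> * x) * (g x)\<^sup>2) \<le> norm (exp (\<alpha> * eps) * (g x)\<^sup>2)"
      using assms(1) by (auto intro!: mult_right_mono)
  qed
  have pt: "exp (\<alpha>*l) * (g l - hopt \<alpha> eps l)\<^sup>2 = exp (\<alpha>*l) * (g l)\<^sup>2 - 2 * m * g l + m * hopt \<alpha> eps l" for l
  proof -
    have e: "exp (\<alpha> * l) * hopt \<alpha> eps l = m" using hopt_exp[OF assms(1,2)] by (simp add: m_def)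
    have "exp (\<alpha>*l) * (g l - hopt \<alpha> eps l)\<^sup>2 = exp (\<alpha>*l) * (g l)\<^sup>2 - 2 * (exp (\<alpha> * l) * hopt \<alpha> eps l) * g l + (exp (\<alpha> * l) * hopt \<alpha> eps l) * hopt \<alpha> eps l"
      by (simp add: power2_eq_square algebra_simps)
    then show ?thesis by (simp add: e)
  qed
  have i1: "set_integrable lborel {0..eps} (\<lambda>l. exp (\<alpha>*l) * (g l)\<^sup>2 - 2 * m * g l + m * hopt \<alpha> eps l)"
    using eg2 gi hi by (intro set_integral_add set_integral_diff set_integrable_mult_right) auto
  then show "set_integrable lborel {0..eps} (\<lambda>l. exp (\<alpha>*l) * (g l - hopt \<alpha> eps l)\<^sup>2)"
    by (simp only: pt)
  have "(LINT l:{0..eps}|lborel. exp (\<alpha>*l) * (g l - hopt \<alpha> eps l)\<^sup>2)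
      = (LINT l:{0..eps}|lborel. exp (\<alpha>*l) * (g l)\<^sup>2 - 2 * m * g l + m * hopt \<alpha> eps l)"
    by (simp only: pt)
  also have "\<dots> = (LINT l:{0..eps}|lborel. exp (\<alpha>*l) * (g l)\<^sup>2) - 2 * m * (LINT l:{0..eps}|lborel. g l) + m * (LINT l:{0..eps}|lborel. hopt \<alpha> eps l)"
    using eg2 gi hi by (simp add: set_integral_add set_integral_diff)
  finally show "(LINT l:{0..eps}|lborel. exp (\<alpha>*l) * (g l)\<^sup>2) = \<alpha> / (1 - exp (- \<alpha> * eps))
           + (LINT l:{0..eps}|lborel. exp (\<alpha>*l) * (g l - hopt \<alpha> eps l)\<^sup>2)"
    using one hint by (simp add: m_def)
qed

lemma sq_int_nonneg: "0 \<le> (LINT l:A|lborel. exp ((\<alpha>::real)*l) * (f l)\<^sup>2)"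
  unfolding set_lebesgue_integral_def by (rule Bochner_Integration.integral_nonneg) (simp add: indicator_def)

lemma adm_wd:
  assumes "\<sigma> \<in> admissible eps" "eps > 0"
  shows "weak_deriv_H1 eps \<sigma> (wderiv eps \<sigma>)" "(LINT l:{0..eps}|lborel. wderiv eps \<sigma> l) = 1"
proof -
  have a: "\<sigma> \<in> H1 eps" "\<sigma> 0 = 0" "\<sigma> eps = 1" using assms(1) by (simp_all add: admissible_def)
  from a(1) have "\<exists>g. weak_deriv_H1 eps \<sigma> g" by (simp add: H1_def)
  then show w: "weak_deriv_H1 eps \<sigma> (wderiv eps \<sigma>)" unfolding wderiv_def by (rule someI_ex)
  have "\<forall>x\<in>{0..eps}. \<sigma> x = \<sigma> 0 + (LINT t:{0..x}|lborel. wderiv eps \<sigma> t)"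
    using w unfolding weak_deriv_H1_def by (elim conjE)
  moreover have "eps \<in> {0..eps}" using assms(2) by simp
  ultimately have "\<sigma> eps = \<sigma> 0 + (LINT t:{0..eps}|lborel. wderiv eps \<sigma> t)"
    by (rule bspec)
  then show "(LINT l:{0..eps}|lborel. wderiv eps \<sigma> l) = 1"
    unfolding a(2,3) by simp
qed

lemma F_eq:
  assumes "(\<alpha>::real) > 0" "eps > 0" "\<sigma> \<in> admissible eps"
  shows "F \<alpha> eps \<sigma> = \<alpha> / (1 - exp (- \<alpha> * eps)) + (LINT l:{0..eps}|lborel. exp (\<alpha>*l) * (wderiv eps \<sigma> l - hopt \<alpha> eps l)\<^sup>2)"
  unfolding F_def by (rule F_identity(2)[OF assms(1,2) adm_wd[OF assms(3,2)]])

lemma F_ge: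
  assumes "(\<alpha>::real) > 0" "eps > 0" "\<sigma> \<in> admissible eps"
  shows "\<alpha> / (1 - exp (- \<alpha> * eps)) \<le> F \<alpha> eps \<sigma>"
  using F_eq[OF assms] sq_int_nonneg by simp

lemma rho_opt_wd:
  assumes "(\<alpha>::real) > 0" "eps > 0"
  shows "weak_deriv_H1 eps (rho_opt \<alpha> eps) (hopt \<alpha> eps)"
  unfolding weak_deriv_H1_def
proof (intro conjI ballI)
  show "hopt \<alpha> eps \<in> borel_measurable lborel" by simp
  show "set_integrable lborel {0..eps} (hopt \<alpha> eps)" by (rule hopt_si)
  show "set_integrable lborel {0..eps} (\<lambda>t. (hopt \<alpha> eps t)\<^sup>2)"
    by (intro borel_integrable_atLeastAtMost' continuous_on_power hopt_cont)
  fix x assume "x \<in> {0..eps}"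
  then show "rho_opt \<alpha> eps x = rho_opt \<alpha> eps 0 + (LINT t:{0..x}|lborel. hopt \<alpha> eps t)"
    using hopt_int[of x \<alpha> eps] by (simp add: rho_opt_def)
qed

lemma rho_opt_adm:
  assumes "(\<alpha>::real) > 0" "eps > 0"
  shows "rho_opt \<alpha> eps \<in> admissible eps"
  unfolding admissible_def H1_def using rho_opt_wd[OF assms] rho_opt_eps[OF assms]
  by (auto simp: rho_opt_def)

lemma wd_parts:
  assumes "weak_deriv_H1 eps \<sigma> g"
  shows "g \<in> borel_measurable borel" "set_integrable lborel {0..eps} g"
    "\<And>x. x \<in> {0..eps} \<Longrightarrow> \<sigma> x = \<sigma> 0 + (LINT t:{0..x}|lborel. g t)"
proof -
  show "g \<in> borel_measurable borel" using assms unfolding weak_deriv_H1_def by (elim conjE) simp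
  show "set_integrable lborel {0..eps} g" using assms unfolding weak_deriv_H1_def by (elim conjE)
  have "\<forall>x\<in>{0..eps}. \<sigma> x = \<sigma> 0 + (LINT t:{0..x}|lborel. g t)"
    using assms unfolding weak_deriv_H1_def by (elim conjE)
  then show "\<And>x. x \<in> {0..eps} \<Longrightarrow> \<sigma> x = \<sigma> 0 + (LINT t:{0..x}|lborel. g t)" by (rule bspec)
qed

lemma F_opt:
  assumes "(\<alpha>::real) > 0" "eps > 0"
  shows "F \<alpha> eps (rho_opt \<alpha> eps) = \<alpha> / (1 - exp (- \<alpha> * eps))"
proof -
  define g where "g = wderiv eps (rho_opt \<alpha> eps)"
  have w: "weak_deriv_H1 eps (rho_opt \<alpha> eps) g"
    unfolding g_def by (rule adm_wd(1)[OF rho_opt_adm[OF assms] assms(2)])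
  note gm[measurable] = wd_parts(1)[OF w] and gi = wd_parts(2)[OF w] and rep = wd_parts(3)[OF w]
  have di: "set_integrable lborel {0..eps} (\<lambda>t. g t - hopt \<alpha> eps t)"
    using gi hopt_si by (rule set_integral_diff)
  have "AE x in lborel. x \<in> {0..eps} \<longrightarrow> g x - hopt \<alpha> eps x = 0"
  proof (rule ae_zero_interval[OF di])
    fix x assume x: "x \<in> {0..eps}"
    have gix: "set_integrable lborel {0..x} g" by (rule set_integrable_subset[OF gi]) (use x in auto)
    have "(LINT t:{0..x}|lborel. g t - hopt \<alpha> eps t) = (LINT t:{0..x}|lborel. g t) - (LINT t:{0..x}|lborel. hopt \<alpha> eps t)"
      using gix hopt_si by (rule set_integral_diff)
    also have "\<dots> = 0" using rep[OF x] hopt_int[of x \<alpha> eps] x by (simp add: rho_opt_def)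
    finally show "(LINT t:{0..x}|lborel. g t - hopt \<alpha> eps t) = 0" .
  qed (use assms in auto)
  then have "(LINT l:{0..eps}|lborel. exp (\<alpha>*l) * (g l - hopt \<alpha> eps l)\<^sup>2) = 0"
    unfolding set_lebesgue_integral_def
    by (intro integral_eq_zero_AE) (auto elim!: eventually_mono split: split_indicator)
  then show ?thesis using F_eq[OF assms rho_opt_adm[OF assms]] by (simp add: g_def)
qed

lemma uniq:
  assumes "(\<alpha>::real) > 0" "eps > 0" "\<rho> \<in> admissible eps"
    and le: "F \<alpha> eps \<rho> \<le> F \<alpha> eps (rho_opt \<alpha> eps)" and l: "l \<in> {0..eps}"
  shows "\<rho> l = rho_opt \<alpha> eps l"
proof -
  define g where "g = wderiv eps \<rho>"
  have w: "weak_deriv_H1 eps \<rho> g" and one: "(LINT l:{0..eps}|lborel. g l) = 1"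
    unfolding g_def using adm_wd[OF assms(3,2)] by auto
  note gm[measurable] = wd_parts(1)[OF w] and gi = wd_parts(2)[OF w] and rep = wd_parts(3)[OF w]
  have si: "set_integrable lborel {0..eps} (\<lambda>l. exp (\<alpha>*l) * (g l - hopt \<alpha> eps l)\<^sup>2)"
    by (rule F_identity(1)[OF assms(1,2) w one])
  have "(LINT l:{0..eps}|lborel. exp (\<alpha>*l) * (g l - hopt \<alpha> eps l)\<^sup>2) \<le> 0"
    using le F_eq[OF assms(1-3)] F_opt[OF assms(1,2)] by (simp add: g_def)
  then have z: "(LINT l:{0..eps}|lborel. exp (\<alpha>*l) * (g l - hopt \<alpha> eps l)\<^sup>2) = 0"
    using sq_int_nonneg[where \<alpha>=\<alpha> and A="{0..eps}" and f="\<lambda>l. g l - hopt \<alpha> eps l"] by linarith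
  have "AE x in lborel. indicator {0..eps} x *\<^sub>R (exp (\<alpha>*x) * (g x - hopt \<alpha> eps x)\<^sup>2) = 0"
    using z si unfolding set_lebesgue_integral_def set_integrable_def
    by (subst (asm) integral_nonneg_eq_0_iff_AE) (auto split: split_indicator)
  then have ae: "AE x in lborel. indicator {0..eps} x *\<^sub>R g x = indicator {0..eps} x *\<^sub>R hopt \<alpha> eps x"
    by eventually_elim (auto split: split_indicator)
  have "(LINT t:{0..l}|lborel. g t) = (LINT t:{0..l}|lborel. hopt \<alpha> eps t)"
    unfolding set_lebesgue_integral_def
    by (intro integral_cong_AE) (use ae l in \<open>auto elim!: eventually_mono split: split_indicator\<close>)
  then show ?thesis using rep[OF l] hopt_int[of l \<alpha> eps] l assms(3) unfolding admissible_def by simp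
qed



definition dq :: "real \<Rightarrow> real \<Rightarrow> real \<Rightarrow> real" where
  "dq a e l = (l * exp (- a * l) * (1 - exp (- a * e)) - (1 - exp (- a * l)) * (e * exp (- a * e))) / (1 - exp (- a * e))\<^sup>2"

lemma deriv_rho:
  assumes "(a::real) > 0" "e > 0"
  shows "deriv (\<lambda>b. rho_opt b e l) a = dq a e l"
proof (rule DERIV_imp_deriv)
  have D: "1 - exp (- a * e) \<noteq> 0" using D_pos[OF assms] by linarith
  have d1: "((\<lambda>b. 1 - exp (- b * l)) has_real_derivative l * exp (- a * l)) (at a)"
    by (auto intro!: derivative_eq_intros)
  have d2: "((\<lambda>b. 1 - exp (- b * e)) has_real_derivative e * exp (- a * e)) (at a)"
    by (auto intro!: derivative_eq_intros)
  from DERIV_divide[OF d1 d2 D]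
  show "((\<lambda>b. rho_opt b e l) has_real_derivative dq a e l) (at a)"
    unfolding rho_opt_def dq_def by (simp add: power2_eq_square)
qed

lemma ftc0:
  fixes f G :: "real \<Rightarrow> real"
  assumes "0 \<le> x" "continuous_on {0..x} f"
    "\<And>t. 0 \<le> t \<Longrightarrow> t \<le> x \<Longrightarrow> (G has_real_derivative f t) (at t within {0..x})"
  shows "(LINT t:{0..x}|lborel. f t) = G x - G 0"
proof -
  have "(LINT t:{0..x}|lborel. f t) = (LBINT t=ereal 0..ereal x. f t)"
    using interval_integral_Icc[of 0 x f, symmetric] assms by simp
  also have "\<dots> = G x - G 0"
    by (rule interval_integral_FTC_finite)
       (use assms in \<open>auto simp: has_real_derivative_iff_has_vector_derivative[symmetric]\<close>)
  finally show ?thesis .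
qed

lemma I1:
  assumes "(a::real) > 0" "e > 0"
  shows "(LINT l:{0..e}|lborel. l\<^sup>2 * exp (- a * l)) \<le> 2 / a^3"
proof -
  define G where "G l = - (l\<^sup>2 / a + 2 * l / a\<^sup>2 + 2 / a^3) * exp (- a * l)" for l
  have "(LINT l:{0..e}|lborel. l\<^sup>2 * exp (- a * l)) = G e - G 0"
  proof (rule ftc0)
    show "continuous_on {0..e} (\<lambda>l. l\<^sup>2 * exp (- a * l))" by (intro continuous_intros)
    fix t show "(G has_real_derivative t\<^sup>2 * exp (- a * t)) (at t within {0..e})"
    proof (rule DERIV_cong)
      have dP: "((\<lambda>l. l\<^sup>2 / a + 2 * l / a\<^sup>2 + 2 / a^3) has_real_derivative 2 * t / a + 2 / a\<^sup>2) (at t within {0..e})"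
        using assms by (auto intro!: derivative_eq_intros simp: field_simps power2_eq_square)
      have dE: "((\<lambda>l. exp (- a * l)) has_real_derivative exp (- a * t) * (- a)) (at t within {0..e})"
        by (auto intro!: derivative_eq_intros)
      show "(G has_real_derivative - ((t\<^sup>2 / a + 2 * t / a\<^sup>2 + 2 / a^3) * (exp (- a * t) * (- a)) + (2 * t / a + 2 / a\<^sup>2) * exp (- a * t))) (at t within {0..e})"
      proof -
        have Geq: "G = (\<lambda>l. - ((l\<^sup>2 / a + 2 * l / a\<^sup>2 + 2 / a^3) * exp (- a * l)))"
          unfolding G_def by (simp add: fun_eq_iff algebra_simps)
        show ?thesis unfolding Geq by (rule DERIV_minus[OF DERIV_mult'[OF dP dE]])
      qed
      show "- ((t\<^sup>2 / a + 2 * t / a\<^sup>2 + 2 / a^3) * (exp (- a * t) * (- a)) + (2 * t / a + 2 / a\<^sup>2) * exp (- a * t)) = t\<^sup>2 * exp (- a * t)"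
        using assms by (simp add: field_simps power2_eq_square power3_eq_cube)
    qed
  qed (use assms in auto)
  also have "\<dots> \<le> 2 / a^3"
  proof -
    have "0 \<le> (e\<^sup>2 / a + 2 * e / a\<^sup>2 + 2 / a^3) * exp (- a * e)" using assms by simp
    moreover have "G e - G 0 = 2 / a^3 - (e\<^sup>2 / a + 2 * e / a\<^sup>2 + 2 / a^3) * exp (- a * e)"
      unfolding G_def by (simp add: algebra_simps)
    ultimately show ?thesis by linarith
  qed
  finally show ?thesis .
qed

lemma I2:
  assumes "(a::real) > 0" "e > 0"
  shows "(LINT l:{0..e}|lborel. exp (a * l)) \<le> exp (a * e) / a"
proof -
  define G where "G l = exp (a * l) / a" for l
  have "(LINT l:{0..e}|lborel. exp (a * l)) = G e - G 0"
  proof (rule ftc0)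
    show "continuous_on {0..e} (\<lambda>l. exp (a * l))" by (intro continuous_intros)
    fix t show "(G has_real_derivative exp (a * t)) (at t within {0..e})"
      unfolding G_def
      by (rule derivative_eq_intros refl | use assms in simp)+
  qed (use assms in auto)
  also have "\<dots> \<le> exp (a * e) / a" unfolding G_def using assms by simp
  finally show ?thesis .
qed


lemma pw:
  assumes "(a::real) > 0" "e > 0" "c0 > 0" "1 - exp (- a * e) \<ge> c0" "0 \<le> l"
  shows "exp (a * l) * (dq a e l)\<^sup>2 \<le> 2 / c0\<^sup>2 * (l\<^sup>2 * exp (- a * l)) + 2 * e\<^sup>2 * (exp (- a * e))\<^sup>2 / c0^4 * exp (a * l)"
proof -
  define D where "D = 1 - exp (- a * e)"
  define N where "N = 1 - exp (- a * l)"
  have D: "c0 \<le> D" "0 < D" using assms unfolding D_def by auto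
  have "exp (- a * l) \<le> 1" using assms by simp
  then have N: "0 \<le> N" "N \<le> 1" unfolding N_def by auto
  define A where "A = l * exp (- a * l) / D"
  define B where "B = N * (e * exp (- a * e)) / D\<^sup>2"
  have dqAB: "dq a e l = A - B"
  proof -
    have "dq a e l = (l * exp (- a * l) * D - N * (e * exp (- a * e))) / D\<^sup>2"
      unfolding dq_def D_def N_def ..
    also have "\<dots> = A - B" unfolding A_def B_def using D(2) by (simp add: field_simps power2_eq_square)
    finally show ?thesis .
  qed
  have "(A - B)\<^sup>2 + (A + B)\<^sup>2 = 2 * A\<^sup>2 + 2 * B\<^sup>2" by (simp add: power2_eq_square algebra_simps)
  moreover have "0 \<le> (A + B)\<^sup>2" by simp
  ultimately have sq: "(A - B)\<^sup>2 \<le> 2 * A\<^sup>2 + 2 * B\<^sup>2" by linarith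
  have ee: "exp (a * l) * exp (- a * l) = 1" by (simp add: exp_add[symmetric])
  have ee2: "exp (a * l) * exp (- (a * l)) = 1" by (simp add: exp_add[symmetric])
  have t1: "exp (a * l) * A\<^sup>2 \<le> l\<^sup>2 * exp (- a * l) / c0\<^sup>2"
  proof -
    have "exp (a * l) * A\<^sup>2 = l\<^sup>2 * exp (- a * l) * (exp (a * l) * exp (- a * l)) / D\<^sup>2"
      unfolding A_def by (simp add: power2_eq_square field_simps)
    also have "\<dots> = l\<^sup>2 * exp (- a * l) / D\<^sup>2" by (simp only: ee mult_1_right)
    also have "\<dots> \<le> l\<^sup>2 * exp (- a * l) / c0\<^sup>2"
      by (rule divide_left_mono) (use D assms in \<open>auto intro: power_mono\<close>)
    finally show ?thesis .
  qed
  have t2: "B\<^sup>2 \<le> e\<^sup>2 * (exp (- a * e))\<^sup>2 / c0^4"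
  proof -
    have "B\<^sup>2 = N\<^sup>2 * (e\<^sup>2 * (exp (- a * e))\<^sup>2) / D^4"
      unfolding B_def by (simp add: power2_eq_square field_simps power4_eq_xxxx)
    also have "\<dots> \<le> 1 * (e\<^sup>2 * (exp (- a * e))\<^sup>2) / D^4"
      by (intro divide_right_mono mult_right_mono) (use N D in \<open>auto simp: power_le_one\<close>)
    also have "\<dots> \<le> e\<^sup>2 * (exp (- a * e))\<^sup>2 / c0^4"
      by simp (rule divide_left_mono, use D assms in \<open>auto intro: power_mono\<close>)
    finally show ?thesis .
  qed
  have "exp (a * l) * (dq a e l)\<^sup>2 \<le> exp (a * l) * (2 * A\<^sup>2 + 2 * B\<^sup>2)"
    unfolding dqAB by (rule mult_left_mono[OF sq]) simp
  also have "\<dots> = 2 * (exp (a * l) * A\<^sup>2) + 2 * (B\<^sup>2 * exp (a * l))" by (simp add: algebra_simps)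
  also have "\<dots> \<le> 2 * (l\<^sup>2 * exp (- a * l) / c0\<^sup>2) + 2 * (e\<^sup>2 * (exp (- a * e))\<^sup>2 / c0^4 * exp (a * l))"
    by (intro add_mono mult_left_mono t1 mult_right_mono t2) auto
  also have "\<dots> = 2 / c0\<^sup>2 * (l\<^sup>2 * exp (- a * l)) + 2 * e\<^sup>2 * (exp (- a * e))\<^sup>2 / c0^4 * exp (a * l)"
    by simp
  finally show ?thesis .
qed


lemma partc:
  assumes "(a::real) > 0" "e > 0" "c0 > 0" "1 - exp (- a * e) \<ge> c0"
  shows "(LINT l:{0..e}|lborel. exp (a * l) * (deriv (\<lambda>b. rho_opt b e l) a)\<^sup>2)
           \<le> (4 / c0\<^sup>2 + 2 / c0^4) * (a powr (-3) + exp (- a * e) * e\<^sup>2 / a)"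
proof -
  define K where "K = 2 * e\<^sup>2 * (exp (- a * e))\<^sup>2 / c0^4"
  have D: "1 - exp (- a * e) \<noteq> 0" using assms by linarith
  have c1: "continuous_on {0..e} (\<lambda>l. exp (a * l) * (dq a e l)\<^sup>2)"
    unfolding dq_def divide_inverse by (intro continuous_intros)
  have i1: "set_integrable lborel {0..e} (\<lambda>l. exp (a * l) * (dq a e l)\<^sup>2)"
    by (rule borel_integrable_atLeastAtMost'[OF c1])
  have i2: "set_integrable lborel {0..e} (\<lambda>l. l\<^sup>2 * exp (- a * l))"
    by (intro borel_integrable_atLeastAtMost' continuous_intros)
  have i3: "set_integrable lborel {0..e} (\<lambda>l. exp (a * l))"
    by (intro borel_integrable_atLeastAtMost' continuous_intros)
  have "(LINT l:{0..e}|lborel. exp (a * l) * (deriv (\<lambda>b. rho_opt b e l) a)\<^sup>2)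
      = (LINT l:{0..e}|lborel. exp (a * l) * (dq a e l)\<^sup>2)"
    by (simp only: deriv_rho[OF assms(1,2)])
  also have "\<dots> \<le> (LINT l:{0..e}|lborel. 2 / c0\<^sup>2 * (l\<^sup>2 * exp (- a * l)) + K * exp (a * l))"
  proof (rule set_integral_mono[OF i1])
    show "set_integrable lborel {0..e} (\<lambda>l. 2 / c0\<^sup>2 * (l\<^sup>2 * exp (- a * l)) + K * exp (a * l))"
      using i2 i3 by (intro set_integral_add set_integrable_mult_right) auto
    fix l :: real assume "l \<in> {0..e}"
    then show "exp (a * l) * (dq a e l)\<^sup>2 \<le> 2 / c0\<^sup>2 * (l\<^sup>2 * exp (- a * l)) + K * exp (a * l)"
      unfolding K_def using pw[OF assms, of l] by simp
  qed
  also have "\<dots> = 2 / c0\<^sup>2 * (LINT l:{0..e}|lborel. l\<^sup>2 * exp (- a * l)) + K * (LINT l:{0..e}|lborel. exp (a * l))"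
    using i2 i3 by (simp add: set_integral_add)
  also have "\<dots> \<le> 2 / c0\<^sup>2 * (2 / a^3) + K * (exp (a * e) / a)"
    using I1[OF assms(1,2)] I2[OF assms(1,2)] assms unfolding K_def
    by (intro add_mono mult_left_mono) auto
  also have "\<dots> = 4 / c0\<^sup>2 * (1 / a^3) + 2 / c0^4 * (exp (- a * e) * e\<^sup>2 / a)"
  proof -
    have "(exp (- a * e))\<^sup>2 * exp (a * e) = exp (- a * e)"
      by (simp add: power2_eq_square exp_add[symmetric])
    then show ?thesis unfolding K_def by (simp add: field_simps)
  qed
  also have "\<dots> \<le> (4 / c0\<^sup>2 + 2 / c0^4) * (1 / a^3 + exp (- a * e) * e\<^sup>2 / a)"
  proof -
    have p: "0 \<le> 4 / c0\<^sup>2" "0 \<le> 2 / c0^4" "0 \<le> 1 / a^3" "0 \<le> exp (- a * e) * e\<^sup>2 / a"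
      using assms by auto
    have "(4 / c0\<^sup>2 + 2 / c0^4) * (1 / a^3 + exp (- a * e) * e\<^sup>2 / a)
        = 4 / c0\<^sup>2 * (1 / a^3) + 2 / c0^4 * (exp (- a * e) * e\<^sup>2 / a)
          + (4 / c0\<^sup>2 * (exp (- a * e) * e\<^sup>2 / a) + 2 / c0^4 * (1 / a^3))"
      by (simp add: algebra_simps)
    moreover have "0 \<le> 4 / c0\<^sup>2 * (exp (- a * e) * e\<^sup>2 / a) + 2 / c0^4 * (1 / a^3)"
      using p by simp
    ultimately show ?thesis by linarith
  qed
  also have "1 / a^3 = a powr (-3)"
  proof -
    have "a powr (-3) = inverse (a powr 3)" by (rule powr_minus)
    also have "a powr 3 = a^3" using assms(1) by simp
    finally show ?thesis by (simp add: inverse_eq_divide)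
  qed
  finally show ?thesis .
qed


theorem lemmaA1:
  fixes \<alpha> eps :: real
  assumes "\<alpha> > 0" and "eps > 0"
  shows "(rho_opt \<alpha> eps \<in> admissible eps \<and>
          (\<forall>\<sigma>\<in>admissible eps. F \<alpha> eps (rho_opt \<alpha> eps) \<le> F \<alpha> eps \<sigma>) \<and>
          (\<forall>\<rho>\<in>admissible eps. (\<forall>\<sigma>\<in>admissible eps. F \<alpha> eps \<rho> \<le> F \<alpha> eps \<sigma>)
              \<longrightarrow> (\<forall>l\<in>{0..eps}. \<rho> l = rho_opt \<alpha> eps l)))
       \<and> Inf (F \<alpha> eps ` admissible eps) = \<alpha> / (1 - exp (- eps * \<alpha>))
       \<and> (\<forall>c0>0. \<exists>C>0. \<forall>a e. a > 0 \<longrightarrow> e > 0 \<longrightarrow> 1 - exp (- a * e) \<ge> c0 \<longrightarrow>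
            (LINT l:{0..e}|lborel. exp (a * l) * (deriv (\<lambda>b. rho_opt b e l) a)\<^sup>2)
              \<le> C * (a powr (-3) + exp (- a * e) * e\<^sup>2 / a))"
proof -
  have adm: "rho_opt \<alpha> eps \<in> admissible eps" by (rule rho_opt_adm[OF assms])
  have Fo: "F \<alpha> eps (rho_opt \<alpha> eps) = \<alpha> / (1 - exp (- \<alpha> * eps))" by (rule F_opt[OF assms])
  have mn: "\<forall>\<sigma>\<in>admissible eps. F \<alpha> eps (rho_opt \<alpha> eps) \<le> F \<alpha> eps \<sigma>"
  proof
    fix \<sigma> assume "\<sigma> \<in> admissible eps"
    then show "F \<alpha> eps (rho_opt \<alpha> eps) \<le> F \<alpha> eps \<sigma>" unfolding Fo by (rule F_ge[OF assms])
  qed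
  have un: "\<forall>\<rho>\<in>admissible eps. (\<forall>\<sigma>\<in>admissible eps. F \<alpha> eps \<rho> \<le> F \<alpha> eps \<sigma>)
              \<longrightarrow> (\<forall>l\<in>{0..eps}. \<rho> l = rho_opt \<alpha> eps l)"
  proof (intro ballI impI)
    fix \<rho> l assume r: "\<rho> \<in> admissible eps" and h: "\<forall>\<sigma>\<in>admissible eps. F \<alpha> eps \<rho> \<le> F \<alpha> eps \<sigma>"
      and l: "l \<in> {0..eps}"
    from h adm have "F \<alpha> eps \<rho> \<le> F \<alpha> eps (rho_opt \<alpha> eps)" by (rule bspec)
    then show "\<rho> l = rho_opt \<alpha> eps l" by (rule uniq[OF assms r _ l])
  qed
  have ee: "- eps * \<alpha> = - \<alpha> * eps" by simp
  have inf: "Inf (F \<alpha> eps ` admissible eps) = \<alpha> / (1 - exp (- eps * \<alpha>))"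
    unfolding ee Fo[symmetric]
  proof (rule cInf_eq_minimum)
    show "F \<alpha> eps (rho_opt \<alpha> eps) \<in> F \<alpha> eps ` admissible eps" using adm by (rule imageI)
    fix y assume "y \<in> F \<alpha> eps ` admissible eps"
    then obtain \<sigma> where "\<sigma> \<in> admissible eps" "y = F \<alpha> eps \<sigma>" by (rule imageE)
    then show "F \<alpha> eps (rho_opt \<alpha> eps) \<le> y" using mn by simp
  qed
  have c: "\<forall>c0>0. \<exists>C>0. \<forall>a e. a > 0 \<longrightarrow> e > 0 \<longrightarrow> 1 - exp (- a * e) \<ge> c0 \<longrightarrow>
            (LINT l:{0..e}|lborel. exp (a * l) * (deriv (\<lambda>b. rho_opt b e l) a)\<^sup>2)
              \<le> C * (a powr (-3) + exp (- a * e) * e\<^sup>2 / a)"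
  proof (intro allI impI)
    fix c0 :: real assume c0: "c0 > 0"
    show "\<exists>C>0. \<forall>a e. a > 0 \<longrightarrow> e > 0 \<longrightarrow> 1 - exp (- a * e) \<ge> c0 \<longrightarrow>
            (LINT l:{0..e}|lborel. exp (a * l) * (deriv (\<lambda>b. rho_opt b e l) a)\<^sup>2)
              \<le> C * (a powr (-3) + exp (- a * e) * e\<^sup>2 / a)"
    proof (intro exI conjI allI impI)
      show "0 < 4 / c0\<^sup>2 + 2 / c0^4" using c0 by (intro add_pos_pos divide_pos_pos) auto
      fix a e :: real assume "a > 0" "e > 0" "1 - exp (- a * e) \<ge> c0"
      then show "(LINT l:{0..e}|lborel. exp (a * l) * (deriv (\<lambda>b. rho_opt b e l) a)\<^sup>2)
              \<le> (4 / c0\<^sup>2 + 2 / c0^4) * (a powr (-3) + exp (- a * e) * e\<^sup>2 / a)"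
        using partc[of a e c0] c0 by simp
    qed
  qed
  show ?thesis using adm mn un inf c by (intro conjI)
qed

end
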